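(* Let $C$ be a configuration of the (substitution-based) Krivine Abstract Machine (KAM) and let $[\![\cdot]\!]$ be the translation of KAM configurations into HOcore described in the context. In the forward direction, if $C \to^{*} C'$, then $[\![C]\!] \Rightarrow [\![C']\!]$ (a sequence of zero or more $\tau$-transitions). In the backward direction, if $[\![C]\!] \Rightarrow P$, then there exists a configuration $C'$ such that $C \to^{*} C'$ and either (i) $P = [\![C']\!]$, or (ii) there exists $P'$ such that $P \xrightarrow{\tau} P' = [\![C']\!]$, or (iii) $C' = \langle \lambda x.t, [] \rangle$ for some $x,t$ and $P = hd(x).[\![t]\!] \parallel \overline{b}\langle 0\rangle$.
   Context: HOcore processes are given by $P,Q ::= a(x).P \mid \overline{a}\langle P\rangle \mid P \parallel Q \mid x \mid 0$, where $a,b,\dots$ are channel names and $x,y,\dots$ are process variables; $a(x).P$ binds $x$ in $P$; parallel composition is associative and commutative with unit $0$; processes are considered up to $\alpha$-conversion. The labelled transition system has labels $\tau$, $\overline{a}\langle P\rangle$ and $a(P)$, with rules: $\overline{a}\langle P\rangle \xrightarrow{\overline{a}\langle P\rangle} 0$; $a(x).Q \xrightarrow{a(P)} Q\{P/x\}$ (capture-avoiding substitution); if $P \xrightarrow{l} P'$ then $P\parallel Q \xrightarrow{l} P'\parallel Q$ and $Q \parallel P \xrightarrow{l} Q \parallel P'$; if $P \xrightarrow{\overline{a}\langle R\rangle} P'$ and $Q \xrightarrow{a(R)} Q'$ then $P \parallel Q \xrightarrow{\tau} P'\parallel Q'$ and $Q\parallel P \xrightarrow{\tau} Q' \parallel P'$.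 $\Rightarrow$ denotes the reflexive transitive closure of $\xrightarrow{\tau}$. KAM: terms $t,s ::= x \mid t\,s \mid \lambda x.t$; stacks $\pi ::= t :: \pi \mid []$; configurations $C ::= \langle t, \pi\rangle$, where all terms are closed. Transitions: $\langle t\,s, \pi\rangle \to \langle t, s :: \pi\rangle$ and $\langle \lambda x.t, s::\pi\rangle \to \langle t\{s/x\}, \pi\rangle$. $\to^*$ is the reflexive transitive closure. Translation (with $c, hd, b$ fixed channel names, $\lambda$-term variables translated as HOcore process variables, and $p$ a variable not occurring in translated entities): $[\![[]]\!] = \overline{b}\langle 0\rangle$; $[\![t::\pi]\!] = \overline{hd}\langle [\![t]\!]\rangle \parallel \overline{c}\langle [\![\pi]\!]\rangle$; $[\![\langle t,\pi\rangle]\!] = [\![t]\!] \parallel \overline{c}\langle[\![\pi]\!]\rangle$; $[\![t\,s]\!] = c(p).([\![t]\!] \parallel \overline{c}\langle \overline{hd}\langle[\![s]\!]\rangle \parallel \overline{c}\langle p\rangle\rangle)$; $[\![\lambda x.t]\!] = c(p).(hd(x).[\![t]\!] \parallel p)$; $[\![x]\!] = x$. *)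

theory Defs
  imports Main
begin

text \<open>Alpha-conversion is built in by using de Bruijn indices for process variables:
  PIn a P binds index 0 in P.  Channel names are strings.\<close>

type_synonym chan = string

datatype proc = PNil | PVar nat | PIn chan proc | POut chan proc | PPar proc proc

fun liftP :: "nat \<Rightarrow> proc \<Rightarrow> proc" where
  "liftP k PNil = PNil"
| "liftP k (PVar n) = PVar (if n < k then n else Suc n)"
| "liftP k (PIn a P) = PIn a (liftP (Suc k) P)"
| "liftP k (POut a P) = POut a (liftP k P)"
| "liftP k (PPar P Q) = PPar (liftP k P) (liftP k Q)"

fun substP :: "nat \<Rightarrow> proc \<Rightarrow> proc \<Rightarrow> proc" where
  "substP k R PNil = PNil"
| "substP k R (PVar n) = (if n < k then PVar n else if n = k then R else PVar (n - 1))"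
| "substP k R (PIn a P) = PIn a (substP (Suc k) (liftP 0 R) P)"
| "substP k R (POut a P) = POut a (substP k R P)"
| "substP k R (PPar P Q) = PPar (substP k R P) (substP k R Q)"

inductive scong :: "proc \<Rightarrow> proc \<Rightarrow> bool" (infix "\<equiv>\<^sub>s" 50) where
  sc_refl: "P \<equiv>\<^sub>s P"
| sc_sym: "P \<equiv>\<^sub>s Q \<Longrightarrow> Q \<equiv>\<^sub>s P"
| sc_trans: "P \<equiv>\<^sub>s Q \<Longrightarrow> Q \<equiv>\<^sub>s R \<Longrightarrow> P \<equiv>\<^sub>s R"
| sc_assoc: "PPar (PPar P Q) R \<equiv>\<^sub>s PPar P (PPar Q R)"
| sc_comm: "PPar P Q \<equiv>\<^sub>s PPar Q P"
| sc_unit: "PPar P PNil \<equiv>\<^sub>s P"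
| sc_in: "P \<equiv>\<^sub>s Q \<Longrightarrow> PIn a P \<equiv>\<^sub>s PIn a Q"
| sc_out: "P \<equiv>\<^sub>s Q \<Longrightarrow> POut a P \<equiv>\<^sub>s POut a Q"
| sc_par: "P \<equiv>\<^sub>s P' \<Longrightarrow> Q \<equiv>\<^sub>s Q' \<Longrightarrow> PPar P Q \<equiv>\<^sub>s PPar P' Q'"

datatype label = Tau | OutL chan proc | InL chan proc

fun label_eq :: "label \<Rightarrow> label \<Rightarrow> bool" where
  "label_eq Tau Tau = True"
| "label_eq (OutL a P) (OutL b Q) = (a = b \<and> P \<equiv>\<^sub>s Q)"
| "label_eq (InL a P) (InL b Q) = (a = b \<and> P \<equiv>\<^sub>s Q)"
| "label_eq _ _ = False"

text \<open>The labelled transition system on processes up to structural congruence: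
  the rules of the paper, plus closure under structural congruence of source,
  target and label (so that it is the LTS on congruence classes).\<close>
inductive ptrans :: "proc \<Rightarrow> label \<Rightarrow> proc \<Rightarrow> bool" where
  t_out: "ptrans (POut a P) (OutL a P) PNil"
| t_in: "ptrans (PIn a Q) (InL a P) (substP 0 P Q)"
| t_parL: "ptrans P l P' \<Longrightarrow> ptrans (PPar P Q) l (PPar P' Q)"
| t_parR: "ptrans P l P' \<Longrightarrow> ptrans (PPar Q P) l (PPar Q P')"
| t_comL: "ptrans P (OutL a R) P' \<Longrightarrow> ptrans Q (InL a R) Q' \<Longrightarrow> ptrans (PPar P Q) Tau (PPar P' Q')"
| t_comR: "ptrans P (OutL a R) P' \<Longrightarrow> ptrans Q (InL a R) Q' \<Longrightarrow> ptrans (PPar Q P) Tau (PPar Q' P')"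
| t_struct: "P \<equiv>\<^sub>s P1 \<Longrightarrow> ptrans P1 l1 P1' \<Longrightarrow> P1' \<equiv>\<^sub>s P' \<Longrightarrow> label_eq l1 l \<Longrightarrow> ptrans P l P'"

definition wtau :: "proc \<Rightarrow> proc \<Rightarrow> bool" where
  "wtau = (\<lambda>P Q. ptrans P Tau Q)\<^sup>*\<^sup>*"

datatype lterm = LVar nat | LApp lterm lterm | LLam lterm

fun liftT :: "nat \<Rightarrow> lterm \<Rightarrow> lterm" where
  "liftT k (LVar n) = LVar (if n < k then n else Suc n)"
| "liftT k (LApp t s) = LApp (liftT k t) (liftT k s)"
| "liftT k (LLam t) = LLam (liftT (Suc k) t)"

fun substT :: "nat \<Rightarrow> lterm \<Rightarrow> lterm \<Rightarrow> lterm" where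
  "substT k s (LVar n) = (if n < k then LVar n else if n = k then s else LVar (n - 1))"
| "substT k s (LApp t u) = LApp (substT k s t) (substT k s u)"
| "substT k s (LLam t) = LLam (substT (Suc k) (liftT 0 s) t)"

fun closedn :: "nat \<Rightarrow> lterm \<Rightarrow> bool" where
  "closedn k (LVar n) = (n < k)"
| "closedn k (LApp t s) = (closedn k t \<and> closedn k s)"
| "closedn k (LLam t) = closedn (Suc k) t"

abbreviation closed :: "lterm \<Rightarrow> bool" where "closed t \<equiv> closedn 0 t"

type_synonym stack = "lterm list"
type_synonym config = "lterm \<times> stack"

definition closed_config :: "config \<Rightarrow> bool" where
  "closed_config C = (closed (fst C) \<and> (\<forall>s\<in>set (snd C). closed s))"

inductive kam_step :: "config \<Rightarrow> config \<Rightarrow> bool" where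
  k_push: "kam_step (LApp t s, \<pi>) (t, s # \<pi>)"
| k_grab: "kam_step (LLam t, s # \<pi>) (substT 0 s t, \<pi>)"

abbreviation kam_steps :: "config \<Rightarrow> config \<Rightarrow> bool" where
  "kam_steps \<equiv> kam_step\<^sup>*\<^sup>*"

definition ch_c :: chan where "ch_c = ''c''"
definition ch_hd :: chan where "ch_hd = ''hd''"
definition ch_b :: chan where "ch_b = ''b''"

text \<open>De Bruijn rendering of the named translation: the auxiliary bound
  variable p (not occurring in translated entities) is a binder, so free
  indices of subterms are shifted past it.
  [t s] = c(p).([t] || c<hd<[s]> || c<p>>),  [\<lambda>x.t] = c(p).(hd(x).[t] || p).\<close>
fun trT :: "lterm \<Rightarrow> proc" where
  "trT (LVar n) = PVar n"
| "trT (LApp t s) = PIn ch_c (PPar (liftP 0 (trT t))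
      (POut ch_c (PPar (POut ch_hd (liftP 0 (trT s))) (POut ch_c (PVar 0)))))"
| "trT (LLam t) = PIn ch_c (PPar (PIn ch_hd (liftP 1 (trT t))) (PVar 0))"

fun trS :: "stack \<Rightarrow> proc" where
  "trS [] = POut ch_b PNil"
| "trS (t # \<pi>) = PPar (POut ch_hd (trT t)) (POut ch_c (trS \<pi>))"

fun trC :: "config \<Rightarrow> proc" where
  "trC (t, \<pi>) = PPar (trT t) (POut ch_c (trS \<pi>))"

end

theory Submission
  imports Defs "HOL-Library.Multiset"
begin

lemma substP_liftP: "substP k R (liftP k P) = P"
  by (induction P arbitrary: k R) auto

lemma liftP_liftP: "i \<le> j \<Longrightarrow> liftP (Suc j) (liftP i P) = liftP i (liftP j P)"
  by (induction P arbitrary: i j) auto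

lemma trT_liftT: "trT (liftT k t) = liftP k (trT t)"
proof (induction t arbitrary: k)
  case (LVar n) then show ?case by simp
next
  case (LApp t s) then show ?case by (simp add: liftP_liftP)
next
  case (LLam t) then show ?case using liftP_liftP[of 1 "Suc k" "trT t"] by simp
qed

lemma substP_liftP_comm:
  "i \<le> j \<Longrightarrow> substP (Suc j) (liftP i R) (liftP i P) = liftP i (substP j R P)"
proof (induction P arbitrary: i j R)
  case (PIn a P)
  have "liftP 0 (liftP i R) = liftP (Suc i) (liftP 0 R)" using liftP_liftP[of 0 i R] by simp
  then show ?case using PIn.IH[of "Suc i" "Suc j" "liftP 0 R"] PIn.prems by simp
qed auto

lemma trT_substT: "trT (substT k s t) = substP k (trT s) (trT t)"
proof (induction t arbitrary: k s)
  case (LVar n) then show ?case by simp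
next
  case (LApp t u) then show ?case by (simp add: substP_liftP_comm)
next
  case (LLam t)
  have e: "liftP 1 (liftP 0 (trT s)) = liftP 0 (liftP 0 (trT s))"
    using liftP_liftP[of 0 0 "trT s"] by simp
  show ?case using LLam.IH[of "Suc k" "liftT 0 s"]
    substP_liftP_comm[of 1 "Suc k" "liftP 0 (trT s)" "trT t"] e
    by (simp add: trT_liftT)
qed

lemma liftP_scong: "R \<equiv>\<^sub>s R' \<Longrightarrow> liftP k R \<equiv>\<^sub>s liftP k R'"
proof (induction arbitrary: k rule: scong.induct)
  case (sc_trans P Q R) then show ?case by (meson scong.sc_trans)
qed (auto intro: scong.intros)

lemma substP_scong_R: "R \<equiv>\<^sub>s R' \<Longrightarrow> substP k R Q \<equiv>\<^sub>s substP k R' Q"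
proof (induction Q arbitrary: k R R')
  case (PIn a Q) then show ?case by (simp add: sc_in liftP_scong)
qed (auto intro: scong.intros)

lemma substP_scong_Q: "Q \<equiv>\<^sub>s Q' \<Longrightarrow> substP k R Q \<equiv>\<^sub>s substP k R Q'"
proof (induction arbitrary: k R rule: scong.induct)
  case (sc_trans P Q R) then show ?case by (meson scong.sc_trans)
qed (auto intro: scong.intros)

section \<open>Normal forms\<close>

datatype nproc = NVar nat | NIn chan "nproc multiset" | NOut chan "nproc multiset"

fun nf :: "proc \<Rightarrow> nproc multiset" where
  "nf PNil = {#}"
| "nf (PVar n) = {#NVar n#}"
| "nf (PIn a P) = {#NIn a (nf P)#}"
| "nf (POut a P) = {#NOut a (nf P)#}"
| "nf (PPar P Q) = nf P + nf Q"

lemma scong_nf: "P \<equiv>\<^sub>s Q \<Longrightarrow> nf P = nf Q"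
  by (induction rule: scong.induct) (auto simp: ac_simps)

definition lp :: "proc list \<Rightarrow> proc" where "lp xs = foldr PPar xs PNil"

definition mkpar :: "proc multiset \<Rightarrow> proc" where "mkpar M = lp (SOME xs. mset xs = M)"

primrec unnf1 :: "nproc \<Rightarrow> proc" where
  "unnf1 (NVar n) = PVar n"
| "unnf1 (NIn a M) = PIn a (mkpar (image_mset unnf1 M))"
| "unnf1 (NOut a M) = POut a (mkpar (image_mset unnf1 M))"

lemma sc_parL: "P \<equiv>\<^sub>s P' \<Longrightarrow> PPar P Q \<equiv>\<^sub>s PPar P' Q"
  by (simp add: sc_par sc_refl)
lemma sc_parR: "Q \<equiv>\<^sub>s Q' \<Longrightarrow> PPar P Q \<equiv>\<^sub>s PPar P Q'"
  by (simp add: sc_par sc_refl)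

lemma lp_move: "lp (ys1 @ x # ys2) \<equiv>\<^sub>s PPar x (lp (ys1 @ ys2))"
proof (induction ys1)
  case Nil then show ?case by (simp add: lp_def sc_refl)
next
  case (Cons y ys1)
  let ?R = "lp (ys1 @ ys2)"
  have "lp ((y # ys1) @ x # ys2) = PPar y (lp (ys1 @ x # ys2))" by (simp add: lp_def)
  also have "\<dots> \<equiv>\<^sub>s PPar y (PPar x ?R)" using Cons sc_parR by blast
  finally have 1: "lp ((y # ys1) @ x # ys2) \<equiv>\<^sub>s PPar y (PPar x ?R)" .
  have 2: "PPar y (PPar x ?R) \<equiv>\<^sub>s PPar (PPar y x) ?R" by (rule sc_sym, rule sc_assoc)
  have 3: "PPar (PPar y x) ?R \<equiv>\<^sub>s PPar (PPar x y) ?R" by (rule sc_parL, rule sc_comm)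
  have 4: "PPar (PPar x y) ?R \<equiv>\<^sub>s PPar x (PPar y ?R)" by (rule sc_assoc)
  have 5: "PPar x (PPar y ?R) = PPar x (lp ((y # ys1) @ ys2))" by (simp add: lp_def)
  show ?case using 1 2 3 4 5 by (metis sc_trans)
qed

lemma lp_perm: "mset xs = mset ys \<Longrightarrow> lp xs \<equiv>\<^sub>s lp ys"
proof (induction xs arbitrary: ys)
  case Nil then show ?case by (simp add: sc_refl)
next
  case (Cons x xs)
  then have "x \<in> set ys" by (metis list.set_intros(1) set_mset_mset)
  then obtain ys1 ys2 where ys: "ys = ys1 @ x # ys2" by (meson split_list)
  have "mset xs = mset (ys1 @ ys2)" using Cons.prems ys by simp
  then have "lp xs \<equiv>\<^sub>s lp (ys1 @ ys2)" using Cons.IH by blast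
  then have "lp (x # xs) \<equiv>\<^sub>s PPar x (lp (ys1 @ ys2))" by (simp add: lp_def sc_parR)
  then show ?case using lp_move[of ys1 x ys2] ys by (metis sc_sym sc_trans)
qed

lemma lp_append: "lp (xs @ ys) \<equiv>\<^sub>s PPar (lp xs) (lp ys)"
proof (induction xs)
  case Nil
  have "PPar PNil (lp ys) \<equiv>\<^sub>s lp ys" by (meson sc_comm sc_trans sc_unit)
  then show ?case by (simp add: lp_def sc_sym)
next
  case (Cons x xs)
  have "lp ((x # xs) @ ys) \<equiv>\<^sub>s PPar x (PPar (lp xs) (lp ys))"
    using Cons by (simp add: lp_def sc_parR)
  moreover have "PPar x (PPar (lp xs) (lp ys)) \<equiv>\<^sub>s PPar (PPar x (lp xs)) (lp ys)"
    by (rule sc_sym, rule sc_assoc)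
  ultimately show ?case by (simp add: lp_def) (meson sc_trans)
qed

lemma mkpar_lp: "mset xs = M \<Longrightarrow> mkpar M \<equiv>\<^sub>s lp xs"
  unfolding mkpar_def by (metis (mono_tags, lifting) lp_perm someI)

lemma mkpar_single: "mkpar {#x#} \<equiv>\<^sub>s x"
proof -
  have "mkpar {#x#} \<equiv>\<^sub>s lp [x]" by (rule mkpar_lp) simp
  then show ?thesis by (simp add: lp_def) (meson sc_trans sc_unit)
qed

lemma unnf_scong: "P \<equiv>\<^sub>s mkpar (image_mset unnf1 (nf P))"
proof (induction P)
  case PNil
  have "mkpar {#} \<equiv>\<^sub>s lp []" by (rule mkpar_lp) simp
  then show ?case by (simp add: lp_def sc_sym)
next
  case (PVar n) then show ?case by (simp add: mkpar_single sc_sym)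
next
  case (PIn a P)
  have "PIn a P \<equiv>\<^sub>s PIn a (mkpar (image_mset unnf1 (nf P)))" using PIn sc_in by blast
  then show ?case using mkpar_single by (simp) (meson sc_sym sc_trans)
next
  case (POut a P)
  have "POut a P \<equiv>\<^sub>s POut a (mkpar (image_mset unnf1 (nf P)))" using POut sc_out by blast
  then show ?case using mkpar_single by (simp) (meson sc_sym sc_trans)
next
  case (PPar P Q)
  obtain xs where xs: "mset xs = image_mset unnf1 (nf P)" by (meson ex_mset)
  obtain ys where ys: "mset ys = image_mset unnf1 (nf Q)" by (meson ex_mset)
  have "mkpar (image_mset unnf1 (nf (PPar P Q))) \<equiv>\<^sub>s lp (xs @ ys)"
    by (rule mkpar_lp) (simp add: xs ys)
  moreover have "lp (xs @ ys) \<equiv>\<^sub>s PPar (lp xs) (lp ys)" by (rule lp_append)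
  moreover have "lp xs \<equiv>\<^sub>s P" using mkpar_lp[OF xs] PPar.IH(1) by (meson sc_sym sc_trans)
  moreover have "lp ys \<equiv>\<^sub>s Q" using mkpar_lp[OF ys] PPar.IH(2) by (meson sc_sym sc_trans)
  ultimately show ?case by (meson sc_par sc_sym sc_trans)
qed

lemma nf_scong: "nf P = nf Q \<Longrightarrow> P \<equiv>\<^sub>s Q"
  using unnf_scong[of P] unnf_scong[of Q] by (metis sc_sym sc_trans)


section \<open>Inversion of transitions\<close>

lemma ptrans_inv:
  "ptrans P l P' \<Longrightarrow>
   (l = Tau \<longrightarrow> (\<exists>a R Q rest. nf P = add_mset (NOut a (nf R)) (add_mset (NIn a (nf Q)) rest)
        \<and> nf P' = nf (substP 0 R Q) + rest)) \<and>
   (\<forall>a R. l = OutL a R \<longrightarrow> (\<exists>R0 rest. nf P = add_mset (NOut a (nf R0)) rest \<and> nf P' = rest \<and> R0 \<equiv>\<^sub>s R)) \<and>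
   (\<forall>a R. l = InL a R \<longrightarrow> (\<exists>Q rest. nf P = add_mset (NIn a (nf Q)) rest \<and> nf P' = nf (substP 0 R Q) + rest))"
proof (induction rule: ptrans.induct)
  case (t_out a P)
  then show ?case by (auto intro: sc_refl)
next
  case (t_in a Q P)
  then show ?case by auto
next
  case (t_parL P l P' Q)
  show ?case
  proof (intro conjI allI impI)
    assume "l = Tau"
    then obtain a R Q0 rest where "nf P = add_mset (NOut a (nf R)) (add_mset (NIn a (nf Q0)) rest)"
        "nf P' = nf (substP 0 R Q0) + rest" using t_parL.IH by blast
    then show "\<exists>a R Qa rest. nf (PPar P Q) = add_mset (NOut a (nf R)) (add_mset (NIn a (nf Qa)) rest) \<and>
          nf (PPar P' Q) = nf (substP 0 R Qa) + rest"
      by (intro exI[of _ a] exI[of _ R] exI[of _ Q0] exI[of _ "rest + nf Q"]) simp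
  next
    fix a R assume "l = OutL a R"
    then obtain R0 rest where "nf P = add_mset (NOut a (nf R0)) rest" "nf P' = rest" "R0 \<equiv>\<^sub>s R"
      using t_parL.IH by blast
    then show "\<exists>R0 rest. nf (PPar P Q) = add_mset (NOut a (nf R0)) rest \<and> nf (PPar P' Q) = rest \<and> R0 \<equiv>\<^sub>s R"
      by (intro exI[of _ R0] exI[of _ "rest + nf Q"]) simp
  next
    fix a R assume "l = InL a R"
    then obtain Q0 rest where "nf P = add_mset (NIn a (nf Q0)) rest" "nf P' = nf (substP 0 R Q0) + rest"
      using t_parL.IH by blast
    then show "\<exists>Qa rest. nf (PPar P Q) = add_mset (NIn a (nf Qa)) rest \<and> nf (PPar P' Q) = nf (substP 0 R Qa) + rest"
      by (intro exI[of _ Q0] exI[of _ "rest + nf Q"]) simp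
  qed
next
  case (t_parR P l P' Q)
  show ?case
  proof (intro conjI allI impI)
    assume "l = Tau"
    then obtain a R Q0 rest where "nf P = add_mset (NOut a (nf R)) (add_mset (NIn a (nf Q0)) rest)"
        "nf P' = nf (substP 0 R Q0) + rest" using t_parR.IH by blast
    then show "\<exists>a R Qa rest. nf (PPar Q P) = add_mset (NOut a (nf R)) (add_mset (NIn a (nf Qa)) rest) \<and>
          nf (PPar Q P') = nf (substP 0 R Qa) + rest"
      by (intro exI[of _ a] exI[of _ R] exI[of _ Q0] exI[of _ "rest + nf Q"]) (simp add: ac_simps)
  next
    fix a R assume "l = OutL a R"
    then obtain R0 rest where "nf P = add_mset (NOut a (nf R0)) rest" "nf P' = rest" "R0 \<equiv>\<^sub>s R"
      using t_parR.IH by blast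
    then show "\<exists>R0 rest. nf (PPar Q P) = add_mset (NOut a (nf R0)) rest \<and> nf (PPar Q P') = rest \<and> R0 \<equiv>\<^sub>s R"
      by (intro exI[of _ R0] exI[of _ "rest + nf Q"]) (simp add: ac_simps)
  next
    fix a R assume "l = InL a R"
    then obtain Q0 rest where "nf P = add_mset (NIn a (nf Q0)) rest" "nf P' = nf (substP 0 R Q0) + rest"
      using t_parR.IH by blast
    then show "\<exists>Qa rest. nf (PPar Q P) = add_mset (NIn a (nf Qa)) rest \<and> nf (PPar Q P') = nf (substP 0 R Qa) + rest"
      by (intro exI[of _ Q0] exI[of _ "rest + nf Q"]) (simp add: ac_simps)
  qed
next
  case (t_comL P a R P' Q Q')
  obtain R0 r1 where 1: "nf P = add_mset (NOut a (nf R0)) r1" "nf P' = r1" "R0 \<equiv>\<^sub>s R"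
    using t_comL.IH(1) by blast
  obtain Q0 r2 where 2: "nf Q = add_mset (NIn a (nf Q0)) r2" "nf Q' = nf (substP 0 R Q0) + r2"
    using t_comL.IH(2) by blast
  have "nf (substP 0 R0 Q0) = nf (substP 0 R Q0)" using 1(3) substP_scong_R scong_nf by blast
  then show ?case using 1 2
    by (intro conjI impI allI, simp_all) (intro exI[of _ a] exI[of _ R0] exI[of _ Q0] exI[of _ "r1 + r2"], simp)
next
  case (t_comR P a R P' Q Q')
  obtain R0 r1 where 1: "nf P = add_mset (NOut a (nf R0)) r1" "nf P' = r1" "R0 \<equiv>\<^sub>s R"
    using t_comR.IH(1) by blast
  obtain Q0 r2 where 2: "nf Q = add_mset (NIn a (nf Q0)) r2" "nf Q' = nf (substP 0 R Q0) + r2"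
    using t_comR.IH(2) by blast
  have "nf (substP 0 R0 Q0) = nf (substP 0 R Q0)" using 1(3) substP_scong_R scong_nf by blast
  then show ?case using 1 2
    by (intro conjI impI allI, simp_all) (intro exI[of _ a] exI[of _ R0] exI[of _ Q0] exI[of _ "r1 + r2"], simp add: ac_simps)
next
  case (t_struct P P1 l1 P1' P' l)
  have e1: "nf P = nf P1" and e2: "nf P1' = nf P'" using t_struct scong_nf by auto
  show ?case
  proof (cases l1)
    case Tau
    then have "l = Tau" using t_struct(4) by (cases l) auto
    then show ?thesis using t_struct.IH Tau e1 e2 by auto
  next
    case (OutL a R1)
    then obtain R where l: "l = OutL a R" "R1 \<equiv>\<^sub>s R" using t_struct(4) by (cases l) auto
    obtain R0 rest where "nf P1 = add_mset (NOut a (nf R0)) rest" "nf P1' = rest" "R0 \<equiv>\<^sub>s R1"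
      using t_struct.IH OutL by blast
    then show ?thesis using l e1 e2 by (auto intro: sc_trans)
  next
    case (InL a R1)
    then obtain R where l: "l = InL a R" "R1 \<equiv>\<^sub>s R" using t_struct(4) by (cases l) auto
    obtain Q rest where q: "nf P1 = add_mset (NIn a (nf Q)) rest" "nf P1' = nf (substP 0 R1 Q) + rest"
      using t_struct.IH InL by blast
    have "nf (substP 0 R1 Q) = nf (substP 0 R Q)" using l(2) substP_scong_R scong_nf by blast
    then show ?thesis using l e1 e2 q by (intro conjI allI impI; simp) (metis)
  qed
qed


section \<open>Forward direction\<close>

lemma chans_distinct: "ch_c \<noteq> ch_hd" "ch_hd \<noteq> ch_b" "ch_c \<noteq> ch_b"
  by (simp_all add: ch_c_def ch_hd_def ch_b_def)

lemma trC_push: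
  "substP 0 (trS \<pi>) (PPar (liftP 0 (trT t)) (POut ch_c (PPar (POut ch_hd (liftP 0 (trT s))) (POut ch_c (PVar 0)))))
   = trC (t, s # \<pi>)"
  by (simp add: substP_liftP)

lemma trC_lam:
  "substP 0 (trS \<pi>) (PPar (PIn ch_hd (liftP 1 (trT u))) (PVar 0)) = PPar (PIn ch_hd (trT u)) (trS \<pi>)"
  using substP_liftP[of 1 "liftP 0 (trS \<pi>)" "trT u"] by simp

lemma step_fwd: "kam_step C C' \<Longrightarrow> wtau (trC C) (trC C')"
proof (induction rule: kam_step.induct)
  case (k_push t s \<pi>)
  have "ptrans (trC (LApp t s, \<pi>)) Tau (PPar (substP 0 (trS \<pi>)
     (PPar (liftP 0 (trT t)) (POut ch_c (PPar (POut ch_hd (liftP 0 (trT s))) (POut ch_c (PVar 0)))))) PNil)"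
    by (simp only: trC.simps trT.simps, rule t_comR[OF t_out t_in])
  then have "ptrans (trC (LApp t s, \<pi>)) Tau (trC (t, s # \<pi>))"
    unfolding trC_push by (rule t_struct[OF sc_refl _ sc_unit]) simp
  then show ?case unfolding wtau_def by blast
next
  case (k_grab u s \<pi>)
  let ?M = "PPar (PPar (PIn ch_hd (trT u)) (POut ch_hd (trT s))) (POut ch_c (trS \<pi>))"
  have "ptrans (trC (LLam u, s # \<pi>)) Tau (PPar (substP 0 (trS (s # \<pi>))
     (PPar (PIn ch_hd (liftP 1 (trT u))) (PVar 0))) PNil)"
    by (simp only: trC.simps trT.simps, rule t_comR[OF t_out t_in])
  then have 1: "ptrans (trC (LLam u, s # \<pi>)) Tau ?M"
    unfolding trC_lam
  proof (rule t_struct[OF sc_refl])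
    show "PPar (PPar (PIn ch_hd (trT u)) (trS (s # \<pi>))) PNil \<equiv>\<^sub>s ?M"
      by (simp, meson sc_unit sc_assoc sc_sym sc_trans)
  qed simp
  have "ptrans ?M Tau (PPar (PPar (substP 0 (trT s) (trT u)) PNil) (POut ch_c (trS \<pi>)))"
    by (rule t_parL, rule t_comR[OF t_out t_in])
  then have 2: "ptrans ?M Tau (trC (substT 0 s u, \<pi>))"
    by (rule t_struct[OF sc_refl]) (simp_all add: trT_substT sc_parL sc_unit)
  show ?case using 1 2 unfolding wtau_def
    by (meson converse_rtranclp_into_rtranclp r_into_rtranclp)
qed

lemma steps_fwd: "kam_steps C C' \<Longrightarrow> wtau (trC C) (trC C')"
proof (induction rule: rtranclp_induct)
  case base then show ?case by (simp add: wtau_def)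
next
  case (step y z) then show ?case using step_fwd unfolding wtau_def by (meson rtranclp_trans)
qed


section \<open>Backward direction\<close>

lemma ms_two:
  assumes "add_mset (NOut a X) (add_mset (NIn a Y) rest) = add_mset (NIn b Y') {#NOut b' X'#}"
  shows "rest = {#} \<and> X = X' \<and> Y = Y' \<and> a = b \<and> a = b'"
proof -
  have "NIn a Y \<in># add_mset (NIn b Y') {#NOut b' X'#}" unfolding assms(1)[symmetric] by simp
  then have 1: "a = b" "Y = Y'" by auto
  have "NOut a X \<in># add_mset (NIn b Y') {#NOut b' X'#}" unfolding assms(1)[symmetric] by simp
  then have 2: "a = b'" "X = X'" by auto
  have "add_mset (NIn b Y') {#NOut b' X'#} = add_mset (NOut a X) (add_mset (NIn a Y) {#})"
    using 1 2 by (simp add: add_mset_commute)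
  then have "rest = {#}" using assms by simp
  then show ?thesis using 1 2 by simp
qed

lemma ms_three:
  assumes "add_mset (NOut a X) (add_mset (NIn a Y) rest) = add_mset (NIn h U) (add_mset (NOut h S) {#NOut c Z#})"
    and "c \<noteq> h"
  shows "rest = {#NOut c Z#} \<and> X = S \<and> Y = U \<and> a = h"
proof -
  have "NIn a Y \<in># add_mset (NIn h U) (add_mset (NOut h S) {#NOut c Z#})" unfolding assms(1)[symmetric] by simp
  then have 1: "a = h" "Y = U" by auto
  have "NOut a X \<in># add_mset (NIn h U) (add_mset (NOut h S) {#NOut c Z#})" unfolding assms(1)[symmetric] by simp
  then have 2: "X = S" using 1 assms(2) by auto
  have "add_mset (NIn h U) (add_mset (NOut h S) {#NOut c Z#}) = add_mset (NOut a X) (add_mset (NIn a Y) {#NOut c Z#})"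
    using 1 2 by (simp add: add_mset_commute)
  with assms(1) have "add_mset (NOut a X) (add_mset (NIn a Y) rest) = add_mset (NOut a X) (add_mset (NIn a Y) {#NOut c Z#})"
    by (rule trans)
  then have "rest = {#NOut c Z#}" by simp
  then show ?thesis using 1 2 by simp
qed

lemma sub_nf: "nf Q = nf Q0 \<Longrightarrow> nf R = nf R0 \<Longrightarrow> nf (substP 0 R Q) = nf (substP 0 R0 Q0)"
  by (meson nf_scong scong_nf sc_trans substP_scong_Q substP_scong_R)

lemma nf_io: "nf (PPar (PIn a B) (POut b Z)) = add_mset (NIn a (nf B)) {#NOut b (nf Z)#}"
  by simp

definition Inv :: "config \<Rightarrow> proc \<Rightarrow> bool" where
  "Inv C P = ((\<exists>C'. kam_steps C C' \<and> nf P = nf (trC C')) \<or>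
     (\<exists>u \<pi>. kam_steps C (LLam u, \<pi>) \<and> nf P = nf (PPar (PIn ch_hd (trT u)) (trS \<pi>))))"

lemma inv_step:
  assumes inv: "Inv C P" and tr: "ptrans P Tau P'"
  shows "Inv C P'"
proof -
  obtain a R Q rest where H: "nf P = add_mset (NOut a (nf R)) (add_mset (NIn a (nf Q)) rest)"
    and H': "nf P' = nf (substP 0 R Q) + rest"
    using ptrans_inv[OF tr] by blast
  from inv[unfolded Inv_def] show ?thesis
  proof (elim disjE exE conjE)
    fix C' assume ks: "kam_steps C C'" and e: "nf P = nf (trC C')"
    obtain t \<pi> where C': "C' = (t, \<pi>)" by fastforce
    show ?thesis
    proof (cases t)
      case (LVar n)
      have "NIn a (nf Q) \<in># nf P" using H by simp
      then show ?thesis using e C' LVar by simp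
    next
      case (LApp t1 s)
      let ?B = "PPar (liftP 0 (trT t1)) (POut ch_c (PPar (POut ch_hd (liftP 0 (trT s))) (POut ch_c (PVar 0))))"
      have "nf P = add_mset (NIn ch_c (nf ?B)) {#NOut ch_c (nf (trS \<pi>))#}"
        using e C' LApp nf_io by simp
      then have m: "rest = {#} \<and> nf R = nf (trS \<pi>) \<and> nf Q = nf ?B"
        using ms_two[OF trans[OF H[symmetric]]] by blast
      then have "nf P' = nf (substP 0 (trS \<pi>) ?B)" using H' sub_nf[of Q ?B R "trS \<pi>"] by simp
      then have "nf P' = nf (trC (t1, s # \<pi>))" unfolding trC_push .
      moreover have "kam_steps C (t1, s # \<pi>)" using ks C' LApp
        by (meson k_push rtranclp.rtrancl_into_rtrancl)
      ultimately show ?thesis unfolding Inv_def by blast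
    next
      case (LLam u)
      let ?B = "PPar (PIn ch_hd (liftP 1 (trT u))) (PVar 0)"
      have "nf P = add_mset (NIn ch_c (nf ?B)) {#NOut ch_c (nf (trS \<pi>))#}"
        using e C' LLam nf_io by simp
      then have m: "rest = {#} \<and> nf R = nf (trS \<pi>) \<and> nf Q = nf ?B"
        using ms_two[OF trans[OF H[symmetric]]] by blast
      then have "nf P' = nf (substP 0 (trS \<pi>) ?B)" using H' sub_nf[of Q ?B R "trS \<pi>"] by simp
      then have "nf P' = nf (PPar (PIn ch_hd (trT u)) (trS \<pi>))" unfolding trC_lam .
      then show ?thesis using ks C' LLam unfolding Inv_def by blast
    qed
  next
    fix u \<pi> assume ks: "kam_steps C (LLam u, \<pi>)" and e: "nf P = nf (PPar (PIn ch_hd (trT u)) (trS \<pi>))"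
    show ?thesis
    proof (cases \<pi>)
      case Nil
      have "nf P = add_mset (NIn ch_hd (nf (trT u))) {#NOut ch_b {#}#}" using e Nil by simp
      then have "a = ch_hd \<and> a = ch_b" using ms_two[OF trans[OF H[symmetric]]] by blast
      then show ?thesis using chans_distinct(2) by metis
    next
      case (Cons s \<pi>')
      have "nf P = add_mset (NIn ch_hd (nf (trT u))) (add_mset (NOut ch_hd (nf (trT s))) {#NOut ch_c (nf (trS \<pi>'))#})"
        using e Cons by simp
      then have m: "rest = {#NOut ch_c (nf (trS \<pi>'))#} \<and> nf R = nf (trT s) \<and> nf Q = nf (trT u)"
        using ms_three[OF trans[OF H[symmetric]] chans_distinct(1)] by blast
      then have "nf P' = nf (substP 0 (trT s) (trT u)) + {#NOut ch_c (nf (trS \<pi>'))#}"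
        using H' sub_nf[of Q "trT u" R "trT s"] by simp
      then have "nf P' = nf (trC (substT 0 s u, \<pi>'))" by (simp add: trT_substT)
      moreover have "kam_steps C (substT 0 s u, \<pi>')" using ks Cons
        by (meson k_grab rtranclp.rtrancl_into_rtrancl)
      ultimately show ?thesis unfolding Inv_def by blast
    qed
  qed
qed

lemma inv_reach: "wtau (trC C) P \<Longrightarrow> Inv C P"
  unfolding wtau_def
proof (induction rule: rtranclp_induct)
  case base then show ?case unfolding Inv_def by blast
next
  case (step y z) then show ?case using inv_step by blast
qed


theorem theorem3p1:
  assumes "closed_config C"
  shows "(\<forall>C'. kam_steps C C' \<longrightarrow> wtau (trC C) (trC C')) \<and>
         (\<forall>P. wtau (trC C) P \<longrightarrow>
            (\<exists>C'. kam_steps C C' \<and>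
               (P \<equiv>\<^sub>s trC C'
                \<or> (\<exists>P'. ptrans P Tau P' \<and> P' \<equiv>\<^sub>s trC C')
                \<or> (\<exists>t. C' = (LLam t, []) \<and> P \<equiv>\<^sub>s PPar (PIn ch_hd (trT t)) (POut ch_b PNil)))))"
proof (intro conjI allI impI)
  fix C' assume "kam_steps C C'" then show "wtau (trC C) (trC C')" by (rule steps_fwd)
next
  fix P assume "wtau (trC C) P"
  then have "Inv C P" by (rule inv_reach)
  then show "\<exists>C'. kam_steps C C' \<and>
               (P \<equiv>\<^sub>s trC C'
                \<or> (\<exists>P'. ptrans P Tau P' \<and> P' \<equiv>\<^sub>s trC C')
                \<or> (\<exists>t. C' = (LLam t, []) \<and> P \<equiv>\<^sub>s PPar (PIn ch_hd (trT t)) (POut ch_b PNil)))"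
    unfolding Inv_def
  proof (elim disjE exE conjE)
    fix C' assume "kam_steps C C'" "nf P = nf (trC C')"
    then show ?thesis using nf_scong by blast
  next
    fix u \<pi> assume ks: "kam_steps C (LLam u, \<pi>)" and e: "nf P = nf (PPar (PIn ch_hd (trT u)) (trS \<pi>))"
    show ?thesis
    proof (cases \<pi>)
      case Nil
      then show ?thesis using ks e nf_scong by fastforce
    next
      case (Cons s \<pi>')
      let ?M = "PPar (PPar (PIn ch_hd (trT u)) (POut ch_hd (trT s))) (POut ch_c (trS \<pi>'))"
      have "nf P = nf ?M" using e Cons by simp
      then have pm: "P \<equiv>\<^sub>s ?M" by (rule nf_scong)
      have "ptrans ?M Tau (PPar (PPar (substP 0 (trT s) (trT u)) PNil) (POut ch_c (trS \<pi>')))"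
        by (rule t_parL, rule t_comR[OF t_out t_in])
      then have "ptrans P Tau (PPar (PPar (substP 0 (trT s) (trT u)) PNil) (POut ch_c (trS \<pi>')))"
        by (rule t_struct[OF pm _ sc_refl]) simp
      moreover have "PPar (PPar (substP 0 (trT s) (trT u)) PNil) (POut ch_c (trS \<pi>')) \<equiv>\<^sub>s trC (substT 0 s u, \<pi>')"
        by (simp add: trT_substT sc_parL sc_unit)
      moreover have "kam_steps C (substT 0 s u, \<pi>')" using ks Cons
        by (meson k_grab rtranclp.rtrancl_into_rtrancl)
      ultimately show ?thesis by blast
    qed
  qed
qed

end
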